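(* Let $d\leq n$ be natural numbers and let $A\subseteq \mathbb{F}_2^n$ satisfy $|A|>2\binom{n}{\leq \lfloor d/2\rfloor}$. Then $\mathsf{int\text{-}deg}(A+A)>d$.
   Context: $\mathbb{F}_2$ is the field with two elements and $A+A=\{a+b \mid a,b\in A\}\subseteq\mathbb{F}_2^n$. For $B\subseteq\mathbb{F}_2^n$ and a function $f:B\to\mathbb{F}_2$, $\deg_B(f)$ is the minimal total degree of a multilinear polynomial $P\in\mathbb{F}_2[x_1,\dots,x_n]$ with $P(b)=f(b)$ for all $b\in B$. The interpolation degree $\mathsf{int\text{-}deg}(B)$ is the maximum of $\deg_B(f)$ over all functions $f:B\to\mathbb{F}_2$, i.e. the smallest $d$ such that every function $B\to\mathbb{F}_2$ agrees on $B$ with some polynomial of degree at most $d$. The notation $\binom{n}{\leq k}$ means $\sum_{i=0}^{k}\binom{n}{i}$. *)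

theory Defs
  imports Main "HOL-Library.Z2"
begin

text \<open>Vectors of F_2^n are represented as functions nat => bit vanishing outside {0..<n}.\<close>
definition vecs :: "nat \<Rightarrow> (nat \<Rightarrow> bit) set" where
  "vecs n = {x. \<forall>i\<ge>n. x i = 0}"

definition sumset :: "(nat \<Rightarrow> bit) set \<Rightarrow> (nat \<Rightarrow> bit) set" where
  "sumset A = {(\<lambda>i. a i + b i) | a b. a \<in> A \<and> b \<in> A}"

text \<open>A multilinear polynomial in x_0,...,x_{n-1} over F_2 is given by its coefficient
  function on monomials (subsets of {0..<n}).\<close>
definition is_mlpoly :: "nat \<Rightarrow> (nat set \<Rightarrow> bit) \<Rightarrow> bool" where
  "is_mlpoly n c \<longleftrightarrow> (\<forall>S. c S \<noteq> 0 \<longrightarrow> S \<subseteq> {0..<n})"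

definition mlpoly_deg :: "(nat set \<Rightarrow> bit) \<Rightarrow> nat" where
  "mlpoly_deg c = Max ({card S | S. c S \<noteq> 0} \<union> {0})"

definition mlpoly_eval :: "nat \<Rightarrow> (nat set \<Rightarrow> bit) \<Rightarrow> (nat \<Rightarrow> bit) \<Rightarrow> bit" where
  "mlpoly_eval n c x = (\<Sum>S\<in>Pow {0..<n}. c S * (\<Prod>i\<in>S. x i))"

definition deg_on :: "nat \<Rightarrow> (nat \<Rightarrow> bit) set \<Rightarrow> ((nat \<Rightarrow> bit) \<Rightarrow> bit) \<Rightarrow> nat" where
  "deg_on n B f = (LEAST d. \<exists>c. is_mlpoly n c \<and> mlpoly_deg c = d \<and>
                              (\<forall>b\<in>B. mlpoly_eval n c b = f b))"

definition int_deg :: "nat \<Rightarrow> (nat \<Rightarrow> bit) set \<Rightarrow> nat" where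
  "int_deg n B = Max (range (deg_on n B))"

end

theory Submission
  imports Defs "HOL-Library.FuncSet"
begin
declare add_bit_eq_xor[simp del] mult_bit_eq_and[simp del]

lemma UNIV_bit2: "(UNIV::bit set) = {0,1}" by (auto intro: bit.exhaust)
lemma bit_add_eq0: "(x::bit) + y = 0 \<longleftrightarrow> x = y" by (cases x; cases y) simp_all

lemma fin_sub: "S \<subseteq> {0..<(n::nat)} \<Longrightarrow> finite S"
  by (rule finite_subset) auto

lemma repr:
  fixes c :: "nat set \<Rightarrow> bit" and A :: "(nat \<Rightarrow> bit) set"
  assumes fin: "finite A"
    and cdeg: "\<And>S. c S \<noteq> 0 \<Longrightarrow> card S \<le> d"
    and ev: "\<And>a b. a \<in> A \<Longrightarrow> b \<in> A \<Longrightarrow>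
       (\<Sum>S\<in>Pow {0..<n}. c S * (\<Prod>i\<in>S. a i + b i)) = (if a = b then 1 else 0)"
  defines "I \<equiv> {U. U \<subseteq> {0..<n} \<and> card U \<le> d div 2}"
  defines "J \<equiv> Sigma (Pow {0..<n}) Pow"
  defines "J1 \<equiv> {j\<in>J. card (snd j) \<le> d div 2}"
  defines "J2 \<equiv> {j\<in>J. \<not> card (snd j) \<le> d div 2 \<and> c (fst j) \<noteq> 0}"
  defines "Aco \<equiv> (\<lambda>Ss T. (\<Sum>a\<in>Ss. \<Prod>i\<in>T. a i))"
  defines "g \<equiv> (\<lambda>U b. (\<Sum>j\<in>{j\<in>J1. snd j = U}. c (fst j) * (\<Prod>i\<in>fst j - snd j. b i)))"
  defines "\<beta> \<equiv> (\<lambda>Ss W. (\<Sum>j\<in>{j\<in>J2. fst j - snd j = W}. c (fst j) * Aco Ss (snd j)))"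
  defines "F \<equiv> (\<lambda>\<alpha> \<beta> b. (\<Sum>U\<in>I. \<alpha> U * g U b) + (\<Sum>W\<in>I. \<beta> W * (\<Prod>i\<in>W. b i)))"
  assumes Ss: "Ss \<subseteq> A" and b: "b \<in> A"
  shows "(if b \<in> Ss then 1 else 0) = F (Aco Ss) (\<beta> Ss) b"
proof -
  have finSs: "finite Ss" using Ss fin finite_subset by blast
  have finJ: "finite J" unfolding J_def
    by (rule finite_SigmaI) (auto intro: fin_sub)
  define t where "t = (\<lambda>j. c (fst j) * Aco Ss (snd j) * (\<Prod>i\<in>fst j - snd j. b i))"
  have "(if b \<in> Ss then 1 else 0) = (\<Sum>a\<in>Ss. if a = b then 1 else (0::bit))"
    using finSs by simp
  also have "\<dots> = (\<Sum>a\<in>Ss. \<Sum>S\<in>Pow {0..<n}. c S * (\<Prod>i\<in>S. a i + b i))"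
  proof (rule sum.cong[OF refl])
    fix a assume "a \<in> Ss"
    hence "a \<in> A" using Ss by blast
    thus "(if a = b then 1 else 0) = (\<Sum>S\<in>Pow {0..<n}. c S * (\<Prod>i\<in>S. a i + b i))"
      by (rule ev[OF _ b, symmetric])
  qed
  also have "\<dots> = (\<Sum>a\<in>Ss. \<Sum>S\<in>Pow {0..<n}. \<Sum>T\<in>Pow S. c S * ((\<Prod>i\<in>T. a i) * (\<Prod>i\<in>S - T. b i)))"
  proof (intro sum.cong refl)
    fix a S assume "S \<in> Pow {0..<n}"
    then have "finite S" by (auto intro: fin_sub)
    then show "c S * (\<Prod>i\<in>S. a i + b i) = (\<Sum>T\<in>Pow S. c S * ((\<Prod>i\<in>T. a i) * (\<Prod>i\<in>S - T. b i)))"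
      by (simp only: prod_add sum_distrib_left)
  qed
  also have "\<dots> = (\<Sum>a\<in>Ss. \<Sum>j\<in>J. c (fst j) * ((\<Prod>i\<in>snd j. a i) * (\<Prod>i\<in>fst j - snd j. b i)))"
    unfolding J_def
    by (intro sum.cong refl, subst sum.Sigma) (auto intro: fin_sub simp: split_beta)
  also have "\<dots> = (\<Sum>j\<in>J. \<Sum>a\<in>Ss. c (fst j) * ((\<Prod>i\<in>snd j. a i) * (\<Prod>i\<in>fst j - snd j. b i)))"
    by (rule sum.swap)
  also have "\<dots> = sum t J"
    unfolding t_def Aco_def
    by (intro sum.cong refl) (simp only: sum_distrib_left sum_distrib_right mult.assoc)
  also have "\<dots> = sum t J1 + sum t (J - J1)"
  proof -
    have "J1 \<subseteq> J" by (auto simp: J1_def)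
    from sum.subset_diff[OF this finJ] have "sum t J = sum t (J - J1) + sum t J1" .
    then show ?thesis by (simp only: add.commute)
  qed
  also have "sum t (J - J1) = sum t J2"
    using finJ unfolding J2_def J1_def t_def
    by (intro sum.mono_neutral_right) auto
  also have "sum t J1 = (\<Sum>U\<in>I. Aco Ss U * g U b)"
  proof -
    have "sum t J1 = (\<Sum>U\<in>I. sum t {j\<in>J1. snd j = U})"
      by (rule sum.group[symmetric]) (use finJ in \<open>auto simp: J1_def I_def J_def intro: fin_sub\<close>)
    also have "\<dots> = (\<Sum>U\<in>I. Aco Ss U * g U b)"
      unfolding g_def t_def
      by (intro sum.cong refl, subst sum_distrib_left, intro sum.cong refl) (auto simp: mult_ac)
    finally show ?thesis .
  qed
  also have "sum t J2 = (\<Sum>W\<in>I. \<beta> Ss W * (\<Prod>i\<in>W. b i))"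
  proof -
    have "sum t J2 = (\<Sum>W\<in>I. sum t {j\<in>J2. fst j - snd j = W})"
    proof (rule sum.group[symmetric])
      show "finite J2" using finJ by (simp add: J2_def)
      show "finite I" unfolding I_def by (rule finite_subset[of _ "Pow {0..<n}"]) auto
      show "(\<lambda>j. fst j - snd j) ` J2 \<subseteq> I"
      proof
        fix W assume "W \<in> (\<lambda>j. fst j - snd j) ` J2"
        then obtain S T where ST: "(S,T) \<in> J2" "W = S - T" by auto
        then have S: "S \<subseteq> {0..<n}" "T \<subseteq> S" "\<not> card T \<le> d div 2" "c S \<noteq> 0"
          by (auto simp: J2_def J_def)
        have fS: "finite S" using S(1) by (rule fin_sub)
        have "card (S - T) + card T = card S"
          using S(2) fS by (metis card_Diff_subset rev_finite_subset le_add_diff_inverse2 card_mono)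
        moreover have "card S \<le> d" using cdeg S(4) .
        moreover have "d \<le> 2 * (d div 2) + 1" by presburger
        ultimately have "card W \<le> d div 2" using S(3) ST(2) by simp
        then show "W \<in> I" using S ST unfolding I_def by auto
      qed
    qed
    also have "\<dots> = (\<Sum>W\<in>I. \<beta> Ss W * (\<Prod>i\<in>W. b i))"
      unfolding \<beta>_def t_def
      by (intro sum.cong refl, subst sum_distrib_right, intro sum.cong refl) (auto simp: mult_ac)
    finally show ?thesis .
  qed
  finally show ?thesis unfolding F_def by simp
qed

lemma repr_ex:
  fixes c :: "nat set \<Rightarrow> bit" and A :: "(nat \<Rightarrow> bit) set"
  assumes fin: "finite A"
    and cdeg: "\<And>S. c S \<noteq> 0 \<Longrightarrow> card S \<le> d"
    and ev: "\<And>a b. a \<in> A \<Longrightarrow> b \<in> A \<Longrightarrow>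
       (\<Sum>S\<in>Pow {0..<n}. c S * (\<Prod>i\<in>S. a i + b i)) = (if a = b then 1 else 0)"
  shows "\<exists>(F :: (nat set \<Rightarrow> bit) \<Rightarrow> (nat set \<Rightarrow> bit) \<Rightarrow> (nat \<Rightarrow> bit) \<Rightarrow> bit) \<alpha> \<beta>.
     (\<forall>Ss b. Ss \<subseteq> A \<longrightarrow> b \<in> A \<longrightarrow> (if b \<in> Ss then 1 else 0) = F (\<alpha> Ss) (\<beta> Ss) b) \<and>
     (\<forall>a a' bb bb' x. (\<forall>U\<in>{U. U \<subseteq> {0..<n} \<and> card U \<le> d div 2}. a U = a' U \<and> bb U = bb' U)
        \<longrightarrow> F a bb x = F a' bb' x)"
  apply (rule exI, rule exI, rule exI, rule conjI)
   apply (intro allI impI)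
   apply (rule repr[OF fin cdeg ev], assumption+)
  apply (intro allI impI)
  apply (intro arg_cong2[where f="(+)"] sum.cong refl)
  apply auto
  done

lemma card_I: "card {U. U \<subseteq> {0..<n::nat} \<and> card U \<le> k} = (\<Sum>i\<le>k. n choose i)"
proof -
  have eq: "{U. U \<subseteq> {0..<n::nat} \<and> card U \<le> k} = (\<Union>i\<in>{..k}. {U. U \<subseteq> {0..<n} \<and> card U = i})"
    by auto
  have "card (\<Union>i\<in>{..k}. {U. U \<subseteq> {0..<n} \<and> card U = i}) = (\<Sum>i\<le>k. card {U. U \<subseteq> {0..<n} \<and> card U = i})"
    by (rule card_UN_disjoint) (auto intro: finite_subset[of _ "Pow {0..<n}"])
  also have "\<dots> = (\<Sum>i\<le>k. n choose i)"
    by (intro sum.cong refl) (simp add: n_subsets)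
  finally show ?thesis using eq by simp
qed

lemma count:
  fixes c :: "nat set \<Rightarrow> bit" and A :: "(nat \<Rightarrow> bit) set"
  assumes fin: "finite A"
    and cdeg: "\<And>S. c S \<noteq> 0 \<Longrightarrow> card S \<le> d"
    and ev: "\<And>a b. a \<in> A \<Longrightarrow> b \<in> A \<Longrightarrow>
       (\<Sum>S\<in>Pow {0..<n}. c S * (\<Prod>i\<in>S. a i + b i)) = (if a = b then 1 else 0)"
  shows "card A \<le> 2 * card {U. U \<subseteq> {0..<n} \<and> card U \<le> d div 2}"
proof -
  have "\<exists>(F :: (nat set \<Rightarrow> bit) \<Rightarrow> (nat set \<Rightarrow> bit) \<Rightarrow> (nat \<Rightarrow> bit) \<Rightarrow> bit) \<alpha> \<beta>.
     (\<forall>Ss b. Ss \<subseteq> A \<longrightarrow> b \<in> A \<longrightarrow> (if b \<in> Ss then 1 else 0) = F (\<alpha> Ss) (\<beta> Ss) b) \<and>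
     (\<forall>a a' bb bb' x. (\<forall>U\<in>{U. U \<subseteq> {0..<n} \<and> card U \<le> d div 2}. a U = a' U \<and> bb U = bb' U)
        \<longrightarrow> F a bb x = F a' bb' x)"
    by (rule repr_ex) (fact fin, fact cdeg, fact ev)
  then obtain F :: "(nat set \<Rightarrow> bit) \<Rightarrow> (nat set \<Rightarrow> bit) \<Rightarrow> (nat \<Rightarrow> bit) \<Rightarrow> bit" where
     "\<exists>\<alpha> \<beta>. (\<forall>Ss b. Ss \<subseteq> A \<longrightarrow> b \<in> A \<longrightarrow> (if b \<in> Ss then 1 else 0) = F (\<alpha> Ss) (\<beta> Ss) b) \<and>
     (\<forall>a a' bb bb' x. (\<forall>U\<in>{U. U \<subseteq> {0..<n} \<and> card U \<le> d div 2}. a U = a' U \<and> bb U = bb' U)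
        \<longrightarrow> F a bb x = F a' bb' x)" ..
  then obtain \<alpha> :: "(nat \<Rightarrow> bit) set \<Rightarrow> nat set \<Rightarrow> bit" where
     "\<exists>\<beta>. (\<forall>Ss b. Ss \<subseteq> A \<longrightarrow> b \<in> A \<longrightarrow> (if b \<in> Ss then 1 else 0) = F (\<alpha> Ss) (\<beta> Ss) b) \<and>
     (\<forall>a a' bb bb' x. (\<forall>U\<in>{U. U \<subseteq> {0..<n} \<and> card U \<le> d div 2}. a U = a' U \<and> bb U = bb' U)
        \<longrightarrow> F a bb x = F a' bb' x)" ..
  then obtain \<beta> :: "(nat \<Rightarrow> bit) set \<Rightarrow> nat set \<Rightarrow> bit" where
     rl: "(\<forall>Ss b. Ss \<subseteq> A \<longrightarrow> b \<in> A \<longrightarrow> (if b \<in> Ss then 1 else 0) = F (\<alpha> Ss) (\<beta> Ss) b) \<and>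
     (\<forall>a a' bb bb' x. (\<forall>U\<in>{U. U \<subseteq> {0..<n} \<and> card U \<le> d div 2}. a U = a' U \<and> bb U = bb' U)
        \<longrightarrow> F a bb x = F a' bb' x)" ..
  note rep0 = conjunct1[OF rl] and loc0 = conjunct2[OF rl]
  define I where "I = {U. U \<subseteq> {0..<n} \<and> card U \<le> d div 2}"
  have finI: "finite I" unfolding I_def by (rule finite_subset[of _ "Pow {0..<n}"]) auto
  have rep: "\<And>Ss b. Ss \<subseteq> A \<Longrightarrow> b \<in> A \<Longrightarrow> (if b \<in> Ss then 1 else 0) = F (\<alpha> Ss) (\<beta> Ss) b"
    using rep0 by blast
  have loc: "\<And>a a' bb bb' x. (\<forall>U\<in>I. a U = a' U \<and> bb U = bb' U) \<Longrightarrow> F a bb x = F a' bb' x"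
    using loc0 unfolding I_def by blast
  define P where "P = PiE I (\<lambda>_. UNIV :: bit set)"
  define \<Phi> where "\<Phi> = (\<lambda>(a,bb). \<lambda>x. if x \<in> A then F a bb x else 0) ` (P \<times> P)"
  define ind where "ind = (\<lambda>Ss x. if x \<in> A then (if x \<in> Ss then 1 else 0) else (0::bit))"
  have sub: "ind ` Pow A \<subseteq> \<Phi>"
  proof
    fix y assume "y \<in> ind ` Pow A"
    then obtain Ss where Ss: "Ss \<subseteq> A" "y = ind Ss" by auto
    have mem: "(restrict (\<alpha> Ss) I, restrict (\<beta> Ss) I) \<in> P \<times> P" unfolding P_def by auto
    have "y = (\<lambda>x. if x \<in> A then F (restrict (\<alpha> Ss) I) (restrict (\<beta> Ss) I) x else 0)"
    proof
      fix x
      have "F (restrict (\<alpha> Ss) I) (restrict (\<beta> Ss) I) x = F (\<alpha> Ss) (\<beta> Ss) x"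
        by (rule loc) auto
      then show "y x = (if x \<in> A then F (restrict (\<alpha> Ss) I) (restrict (\<beta> Ss) I) x else 0)"
        using rep[OF Ss(1)] unfolding Ss(2) ind_def by auto
    qed
    then show "y \<in> \<Phi>" unfolding \<Phi>_def using mem by force
  qed
  have inj: "inj_on ind (Pow A)"
  proof (rule inj_onI)
    fix S1 S2 assume S: "S1 \<in> Pow A" "S2 \<in> Pow A" "ind S1 = ind S2"
    show "S1 = S2"
    proof (rule set_eqI)
      fix x
      have "ind S1 x = ind S2 x" using S(3) by simp
      then show "x \<in> S1 \<longleftrightarrow> x \<in> S2" using S(1,2) unfolding ind_def
        by (cases "x \<in> A") (auto split: if_splits)
    qed
  qed
  have cardP: "card P = 2 ^ card I"
    unfolding P_def using finI by (simp add: card_PiE UNIV_bit2 numeral_2_eq_2)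
  have finP: "finite P" unfolding P_def using finI by (intro finite_PiE) (simp_all add: UNIV_bit2)
  have "(2::nat) ^ card A = card (Pow A)" using fin by (simp add: card_Pow)
  also have "\<dots> = card (ind ` Pow A)" using inj by (simp add: card_image)
  also have "\<dots> \<le> card \<Phi>" using sub finP unfolding \<Phi>_def by (intro card_mono) auto
  also have "\<dots> \<le> card (P \<times> P)" unfolding \<Phi>_def using finP by (intro card_image_le) auto
  also have "\<dots> = 2 ^ (2 * card I)" using cardP by (simp add: card_cartesian_product power_add mult_2)
  finally have "(2::nat) ^ card A \<le> 2 ^ (2 * card I)" .
  then show ?thesis unfolding I_def by simp
qed


lemma prod_one_plus: "(\<Prod>i\<in>{0..<n::nat}. x i + 1) = (if \<forall>i<n. x i = 0 then 1 else (0::bit))"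
proof (cases "\<forall>i<n. x i = 0")
  case True
  then have "(\<Prod>i\<in>{0..<n}. x i + 1) = (\<Prod>i\<in>{0..<n}. (1::bit))" by (intro prod.cong) auto
  then show ?thesis using True by simp
next
  case False
  then obtain i where "i < n" "x i \<noteq> 0" by auto
  then have "x i + 1 = 0" by simp
  then have "(\<Prod>i\<in>{0..<n}. x i + 1) = 0" using \<open>i < n\<close> by (intro prod_zero) auto
  then show ?thesis using False by simp
qed

theorem theorem1p6:
  fixes n d :: nat and A :: "(nat \<Rightarrow> bit) set"
  assumes "d \<le> n"
    and "A \<subseteq> vecs n"
    and "card A > 2 * (\<Sum>i\<le>d div 2. n choose i)"
  shows "int_deg n (sumset A) > d"
proof -
  define B where "B = sumset A"
  have finA: "finite A" using assms(3) by (metis card.infinite not_less_zero)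
  have Beq: "B = (\<lambda>(a,b). \<lambda>i. a i + b i) ` (A \<times> A)" unfolding B_def sumset_def by auto
  have finB: "finite B" unfolding Beq using finA by simp
  have Bsub: "B \<subseteq> vecs n"
  proof
    fix x assume "x \<in> B"
    then obtain a b where ab: "a \<in> A" "b \<in> A" "x = (\<lambda>i. a i + b i)" unfolding B_def sumset_def by blast
    then have "\<forall>i\<ge>n. a i = 0" "\<forall>i\<ge>n. b i = 0" using assms(2) unfolding vecs_def by auto
    then show "x \<in> vecs n" using ab(3) unfolding vecs_def by simp
  qed
  define f0 where "f0 = (\<lambda>x::nat \<Rightarrow> bit. if x = (\<lambda>i. 0) then 1 else (0::bit))"
  define c0 where "c0 = (\<lambda>S. if S \<subseteq> {0..<n} then 1 else (0::bit))"
  have c0ml: "is_mlpoly n c0" unfolding is_mlpoly_def c0_def by auto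
  have c0ev: "\<forall>b\<in>B. mlpoly_eval n c0 b = f0 b"
  proof
    fix x assume "x \<in> B"
    then have xv: "\<forall>i\<ge>n. x i = 0" using Bsub vecs_def by auto
    have "mlpoly_eval n c0 x = (\<Sum>S\<in>Pow {0..<n}. (\<Prod>i\<in>S. x i))"
      unfolding mlpoly_eval_def c0_def by (intro sum.cong) auto
    also have "\<dots> = (\<Sum>S\<in>Pow {0..<n}. (\<Prod>i\<in>S. x i) * (\<Prod>i\<in>{0..<n} - S. 1))" by (simp only: prod.neutral_const mult_1_right)
    also have "\<dots> = (\<Prod>i\<in>{0..<n}. x i + 1)" by (rule prod_add[symmetric]) simp
    also have "\<dots> = f0 x" unfolding prod_one_plus f0_def using xv
      by (auto simp: fun_eq_iff) (meson not_le)
    finally show "mlpoly_eval n c0 x = f0 x" .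
  qed
  have exw: "\<exists>dd c. is_mlpoly n c \<and> mlpoly_deg c = dd \<and> (\<forall>b\<in>B. mlpoly_eval n c b = f0 b)"
    using c0ml c0ev by blast
  obtain c where c: "is_mlpoly n c" "mlpoly_deg c = deg_on n B f0" "\<forall>b\<in>B. mlpoly_eval n c b = f0 b"
    using LeastI_ex[OF exw] unfolding deg_on_def by blast
  have gt: "deg_on n B f0 > d"
  proof (rule ccontr)
    assume "\<not> d < deg_on n B f0"
    then have dle: "mlpoly_deg c \<le> d" using c(2) by simp
    have fin_cards: "finite ({card S | S. c S \<noteq> 0} \<union> {0})"
    proof -
      have "{card S | S. c S \<noteq> 0} \<subseteq> card ` Pow {0..<n}" using c(1) unfolding is_mlpoly_def by auto
      then show ?thesis by (meson finite_Un finite_subset finite_insert finite.emptyI finite_imageI finite_Pow_iff finite_atLeastLessThan)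
    qed
    have cdeg: "\<And>S. c S \<noteq> 0 \<Longrightarrow> card S \<le> d"
    proof -
      fix S assume "c S \<noteq> 0"
      then have "card S \<le> mlpoly_deg c" unfolding mlpoly_deg_def
        by (intro Max_ge[OF fin_cards]) auto
      then show "card S \<le> d" using dle by simp
    qed
    have ev: "\<And>a b. a \<in> A \<Longrightarrow> b \<in> A \<Longrightarrow>
       (\<Sum>S\<in>Pow {0..<n}. c S * (\<Prod>i\<in>S. a i + b i)) = (if a = b then 1 else 0)"
    proof -
      fix a b assume ab: "a \<in> A" "b \<in> A"
      then have "(\<lambda>i. a i + b i) \<in> B" unfolding B_def sumset_def by blast
      then have "mlpoly_eval n c (\<lambda>i. a i + b i) = f0 (\<lambda>i. a i + b i)" using c(3) by blast
      moreover have "((\<lambda>i. a i + b i) = (\<lambda>i. 0)) \<longleftrightarrow> a = b"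
        by (simp only: fun_eq_iff bit_add_eq0)
      ultimately show "(\<Sum>S\<in>Pow {0..<n}. c S * (\<Prod>i\<in>S. a i + b i)) = (if a = b then 1 else 0)"
        unfolding mlpoly_eval_def f0_def by simp
    qed
    have "card A \<le> 2 * card {U. U \<subseteq> {0..<n} \<and> card U \<le> d div 2}"
      by (rule count) (fact finA, fact cdeg, fact ev)
    then show False using assms(3) by (simp add: card_I)
  qed
  have finR: "finite (range (deg_on n B))"
  proof -
    have "range (deg_on n B) \<subseteq> deg_on n B ` {f. \<forall>x. (x \<in> B \<longrightarrow> f x \<in> UNIV) \<and> (x \<notin> B \<longrightarrow> f x = 0)}"
    proof
      fix y assume "y \<in> range (deg_on n B)"
      then obtain f where y: "y = deg_on n B f" by auto
      define f' where "f' = (\<lambda>x. if x \<in> B then f x else 0)"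
      have "deg_on n B f = deg_on n B f'" unfolding deg_on_def f'_def
        by (intro arg_cong[where f=Least] ext) auto
      moreover have "f' \<in> {f. \<forall>x. (x \<in> B \<longrightarrow> f x \<in> UNIV) \<and> (x \<notin> B \<longrightarrow> f x = 0)}"
        unfolding f'_def by auto
      ultimately show "y \<in> deg_on n B ` {f. \<forall>x. (x \<in> B \<longrightarrow> f x \<in> UNIV) \<and> (x \<notin> B \<longrightarrow> f x = 0)}"
        using y by blast
    qed
    moreover have "finite {f. \<forall>x. (x \<in> B \<longrightarrow> f x \<in> (UNIV::bit set)) \<and> (x \<notin> B \<longrightarrow> f x = 0)}"
      by (rule finite_set_of_finite_funs) (use finB in \<open>simp_all add: UNIV_bit2\<close>)
    ultimately show ?thesis by (meson finite_imageI finite_subset)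
  qed
  have "deg_on n B f0 \<le> int_deg n B" unfolding int_deg_def by (rule Max_ge[OF finR]) simp
  then show ?thesis using gt unfolding B_def by simp
qed
end
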